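(* Let $N\in\mathbb{N}$, $a\in\{1,\dots,N\}$, and $\varepsilon,p,q,C\in\mathbb{R}$ with $\varepsilon>0$, $p>1$, $C>0$. Let $(M_k)_{k\ge0}$ be real numbers with $|M_k|<\dfrac{C\log^q(Nk+N+a)}{k^p+\varepsilon}$ for all $k\in\mathbb{N}_0$. Then $$\lim_{n\to\infty}\sum_{k=0}^n|M_k|\frac{N\left[\left(\frac{a}{N}\right)_{n+1}\right]^2}{(n-k)!\left(\frac{2a}{N}\right)_{n+k+1}}=\frac{N}{B\left(\frac{a}{N},\frac{a}{N}\right)}\sum_{k=0}^\infty|M_k|.$$
   Context: $(x)_m$ is the Pochhammer symbol and $B(x,y)=\Gamma(x)\Gamma(y)/\Gamma(x+y)$ is the Beta function. *)

theory Defs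
  imports "HOL-Analysis.Analysis"
begin

end

theory Submission
  imports Defs
begin

definition wt :: "real \<Rightarrow> nat \<Rightarrow> nat \<Rightarrow> real" where
  "wt x n k = pochhammer x (n + 1) ^ 2 / (fact (n - k) * pochhammer (2 * x) (n + k + 1))"

lemma wt_nonneg: "x > 0 \<Longrightarrow> wt x n k \<ge> 0"
  unfolding wt_def by (intro divide_nonneg_pos mult_pos_pos) (auto intro!: pochhammer_pos)

lemma wt_Suc:
  assumes "x > 0" "k < n"
  shows "wt x n (Suc k) = wt x n k * ((real n - real k) / (2 * x + real n + real k + 1))"
proof -
  have f: "(fact (n - k) :: real) = real (n - k) * fact (n - Suc k)"
    using assms(2) by (metis Suc_diff_Suc fact_Suc of_nat_fact)
  have p: "pochhammer (2 * x) (n + Suc k + 1) = pochhammer (2 * x) (n + k + 1) * (2 * x + real n + real k + 1)"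
    by (simp add: pochhammer_Suc add_ac)
  have gen: "\<And>A F P D m :: real. F>0 \<Longrightarrow> P>0 \<Longrightarrow> D>0 \<Longrightarrow> m>0 \<Longrightarrow> A/(F*(P*D)) = A/(m*F*P) * (m/D)"
    by (simp add: field_simps)
  have D: "2 * x + real n + real k + 1 > 0" using assms by simp
  have pos1: "pochhammer (2 * x) (n + k + 1) > 0" using assms by (intro pochhammer_pos) auto
  have pos2: "(fact (n - Suc k) :: real) > 0" by simp
  have nk: "real (n - k) = real n - real k" using assms by simp
  have nk2: "real n - real k > 0" using assms by simp
  show ?thesis unfolding wt_def f p nk
    by (rule gen[OF pos2 pos1 D nk2])
qed

lemma wt_le: "x > 0 \<Longrightarrow> k \<le> n \<Longrightarrow> wt x n k \<le> wt x n 0"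
proof (induction k)
  case (Suc k)
  have "wt x n (Suc k) = wt x n k * ((real n - real k) / (2 * x + real n + real k + 1))"
    using Suc by (intro wt_Suc) auto
  also have "\<dots> \<le> wt x n k * 1"
    using Suc.prems wt_nonneg[of x n k]
    by (intro mult_left_mono) (auto simp: field_simps)
  finally show ?case using Suc by simp
qed simp

lemma wt_prod: "x > 0 \<Longrightarrow> k \<le> n \<Longrightarrow>
  wt x n k = wt x n 0 * (\<Prod>j<k. (real n - real j) / (2 * x + real n + real j + 1))"
proof (induction k)
  case (Suc k)
  then show ?case using wt_Suc[of x k n] by simp
qed simp

lemma wt0: "x > 0 \<Longrightarrow> wt x n 0 = Gamma_series (2 * x) n / (Gamma_series x n)^2"
proof -
  assume x: "x > 0"
  define E where "E = exp (x * ln (real n))"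
  have ee: "2 * x * ln (real n) = x * ln (real n) + x * ln (real n)" by simp
  have e: "exp (2 * x * ln (real n)) = E * E"
    unfolding E_def ee by (simp only: exp_add)
  have E: "E > 0" unfolding E_def by simp
  have ee3: "x * (2 * ln (real n)) = x * ln (real n) + x * ln (real n)" by simp
  have e3: "exp (x * (2 * ln (real n))) = exp (x * ln (real n)) * exp (x * ln (real n))"
    unfolding ee3 by (simp only: exp_add)
  have p1: "pochhammer x (n+1) > 0" using x by (intro pochhammer_pos) auto
  have p2: "pochhammer (2*x) (n+1) > 0" using x by (intro pochhammer_pos) auto
  show ?thesis unfolding wt_def Gamma_series_def e E_def[symmetric] using E p1 p2 e3
    by (simp add: field_simps power2_eq_square)
qed

lemma wt0_lim: "x > 0 \<Longrightarrow> (\<lambda>n. wt x n 0) \<longlonglongrightarrow> 1 / Beta x x"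
proof -
  assume x: "x > 0"
  have "(\<lambda>n. Gamma_series (2 * x) n / (Gamma_series x n)^2) \<longlonglongrightarrow> Gamma (2*x) / (Gamma x)^2"
  proof (rule tendsto_divide[OF Gamma_series_LIMSEQ tendsto_power[OF Gamma_series_LIMSEQ]])
    show "(Gamma x)^2 \<noteq> 0" using Gamma_real_pos[OF x] by simp
  qed
  moreover have "Gamma (2*x) / (Gamma x)^2 = 1 / Beta x x"
  proof -
    have gen: "\<And>A B::real. A \<noteq> 0 \<Longrightarrow> B/(A*A) = 1/(A*A/B)" by simp
    have g: "Gamma x \<noteq> 0" using Gamma_real_pos[OF x] by linarith
    show ?thesis unfolding Beta_def mult_2 power2_eq_square by (rule gen[OF g])
  qed
  moreover have "(\<lambda>n. wt x n 0) = (\<lambda>n. Gamma_series (2 * x) n / (Gamma_series x n)^2)"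
    using wt0[OF x] by blast
  ultimately show ?thesis by metis
qed

lemma factor_lim: "c > 0 \<Longrightarrow> (\<lambda>n. (real n - real j) / (c + real n)) \<longlonglongrightarrow> 1"
proof -
  assume "c > 0"
  have "(\<lambda>n. (1 - real j / real n) / (1 + c / real n)) \<longlonglongrightarrow> (1 - 0) / (1 + 0)"
    by (intro tendsto_intros lim_const_over_n) auto
  moreover have "eventually (\<lambda>n. (1 - real j / real n) / (1 + c / real n) = (real n - real j) / (c + real n)) sequentially"
    using eventually_gt_at_top[of 0]
  proof eventually_elim
    case (elim n)
    have a: "1 - real j / real n = (real n - real j) / real n" "1 + c / real n = (c + real n) / real n"
      using elim by (simp_all add: field_simps)
    have b: "c + real n > 0" "real n > 0" using elim \<open>c > 0\<close> by auto
    show ?case unfolding a using b by (simp add: divide_simps)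
  qed
  ultimately show ?thesis by (simp add: tendsto_cong)
qed

lemma factor_lim2: "x > 0 \<Longrightarrow> (\<lambda>n. (real n - real j) / (2 * x + real n + real j + 1)) \<longlonglongrightarrow> 1"
proof -
  assume x: "x > 0"
  have "(\<lambda>n. (real n - real j) / ((2 * x + real j + 1) + real n)) \<longlonglongrightarrow> 1"
    using x by (intro factor_lim) auto
  moreover have "(\<lambda>n. (real n - real j) / ((2 * x + real j + 1) + real n)) = (\<lambda>n. (real n - real j) / (2 * x + real n + real j + 1))"
    by (simp add: algebra_simps)
  ultimately show ?thesis by simp
qed

lemma wt_lim: "x > 0 \<Longrightarrow> (\<lambda>n. wt x n k) \<longlonglongrightarrow> 1 / Beta x x"
proof -
  assume x: "x > 0"
  have "(\<lambda>n. wt x n 0 * (\<Prod>j<k. (real n - real j) / (2 * x + real n + real j + 1))) \<longlonglongrightarrow> 1 / Beta x x * (\<Prod>j<k. 1)"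
    by (rule tendsto_mult[OF wt0_lim[OF x] tendsto_prod[OF factor_lim2[OF x]]])
  moreover have "eventually (\<lambda>n. wt x n 0 * (\<Prod>j<k. (real n - real j) / (2 * x + real n + real j + 1))
      = wt x n k) sequentially"
    using eventually_ge_at_top[of k]
    by eventually_elim (rule wt_prod[OF x, symmetric])
  ultimately show ?thesis by (simp add: tendsto_cong)
qed


lemma log_bound:
  fixes N a :: nat and p q :: real
  assumes "1 \<le> a" "a \<le> N" "p > 1"
  shows "\<exists>K. \<forall>k\<ge>1. (ln (real (N*k+N+a))) powr q \<le> K * real k powr ((p-1)/2)"
proof -
  define \<delta> where "\<delta> = (p-1)/2"
  have d: "\<delta> > 0" using assms by (simp add: \<delta>_def)
  show ?thesis
  proof (cases "q \<le> 0")
    case True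
    show ?thesis unfolding \<delta>_def[symmetric]
    proof (intro exI allI impI)
      fix k :: nat assume k: "k \<ge> 1"
      have "(2::nat) \<le> N*k+N+a" using assms by simp
      hence y2: "2 \<le> real (N*k+N+a)" by linarith
      have l2: "ln 2 \<le> ln (real (N*k+N+a))" using y2 by simp
      have "ln (real (N*k+N+a)) powr q \<le> (ln 2) powr q"
        by (rule powr_mono2'[OF True _ l2]) simp
      also have "\<dots> \<le> (ln 2) powr q * real k powr \<delta>"
      proof -
        have "1 \<le> real k powr \<delta>" using ge_one_powr_ge_zero[of "real k" \<delta>] k d by auto
        from mult_left_mono[OF this, of "ln 2 powr q"] show ?thesis by simp
      qed
      finally show "ln (real (N*k+N+a)) powr q \<le> (ln 2) powr q * real k powr \<delta>" .
    qed
  next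
    case False
    hence q: "q > 0" by simp
    show ?thesis unfolding \<delta>_def[symmetric]
    proof (intro exI allI impI)
      fix k :: nat assume k: "k \<ge> 1"
      define y where "y = real (N*k+N+a)"
      have "(1::nat) \<le> N*k+N+a" using assms by simp
      hence y1: "1 \<le> y" unfolding y_def by linarith
      have Nk: "N \<le> N*k" using k by simp
      have "N*k+N+a \<le> 3*N*k" using Nk assms(2) by linarith
      hence y3: "y \<le> 3 * real N * real k" unfolding y_def
        by (metis of_nat_le_iff of_nat_mult of_nat_numeral)
      have dq: "\<delta>/q > 0" using d q by simp
      have l: "ln y \<le> y powr (\<delta>/q) / (\<delta>/q)" by (rule ln_powr_bound[OF y1 dq])
      have l0: "0 \<le> ln y" using y1 by simp
      have "ln y powr q \<le> (y powr (\<delta>/q) / (\<delta>/q)) powr q"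
        by (rule powr_mono2) (use q l0 l in auto)
      also have "\<dots> = (y powr (\<delta>/q) * (q/\<delta>)) powr q" by simp
      also have "\<dots> = (y powr (\<delta>/q)) powr q * (q/\<delta>) powr q"
        by (rule powr_mult)
      also have "\<dots> = y powr \<delta> * (q/\<delta>) powr q"
        using q by (simp add: powr_powr)
      also have "\<dots> \<le> (3 * real N * real k) powr \<delta> * (q/\<delta>) powr q"
        using y3 y1 d by (intro mult_right_mono powr_mono2) auto
      also have "\<dots> = ((q/\<delta>) powr q * (3 * real N) powr \<delta>) * real k powr \<delta>"
        by (simp add: powr_mult)
      finally show "ln (real (N*k+N+a)) powr q \<le> ((q/\<delta>) powr q * (3 * real N) powr \<delta>) * real k powr \<delta>"
        unfolding y_def .
    qed
  qed
qed

lemma summable_bound: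
  fixes N a :: nat and \<epsilon> p q C :: real
  assumes "1 \<le> a" "a \<le> N" "\<epsilon> > 0" "p > 1" "C > 0"
  shows "summable (\<lambda>k::nat. C * (ln (real (N*k+N+a))) powr q / (real k powr p + \<epsilon>))"
proof -
  define \<delta> where "\<delta> = (p-1)/2"
  obtain K where K: "\<And>k. k \<ge> 1 \<Longrightarrow> (ln (real (N*k+N+a))) powr q \<le> K * real k powr \<delta>"
    using log_bound[OF assms(1,2,4), of q] unfolding \<delta>_def by blast
  have K0: "K \<ge> 0"
  proof -
    have "0 \<le> (ln (real (N*1+N+a))) powr q" by simp
    also have "\<dots> \<le> K * real 1 powr \<delta>" by (rule K) simp
    finally show ?thesis by simp
  qed
  have s: "summable (\<lambda>k::nat. C * K * real k powr (\<delta> - p))"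
  proof (intro summable_mult)
    have "\<delta> - p < -1" using assms(4) unfolding \<delta>_def by (simp add: field_simps)
    thus "summable (\<lambda>k::nat. real k powr (\<delta> - p))" by (simp add: summable_real_powr_iff)
  qed
  show ?thesis
  proof (rule summable_comparison_test'[OF s, of 1])
    fix k :: nat assume k: "k \<ge> 1"
    have kp: "real k powr p > 0" using k by simp
    have nn: "0 \<le> C * (ln (real (N*k+N+a))) powr q / (real k powr p + \<epsilon>)"
      using assms by (intro divide_nonneg_pos mult_nonneg_nonneg) (auto intro: add_pos_pos kp)
    have "C * (ln (real (N*k+N+a))) powr q / (real k powr p + \<epsilon>) \<le> C * (K * real k powr \<delta>) / (real k powr p)"
      using assms K[OF k] kp K0 by (intro frac_le mult_left_mono) auto
    also have "\<dots> = C * K * real k powr (\<delta> - p)"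
      by (simp add: powr_diff)
    finally have L: "C * (ln (real (N*k+N+a))) powr q / (real k powr p + \<epsilon>) \<le> C * K * real k powr (\<delta> - p)" .
    show "norm (C * (ln (real (N*k+N+a))) powr q / (real k powr p + \<epsilon>)) \<le> C * K * real k powr (\<delta> - p)"
      using L unfolding real_norm_def abs_of_nonneg[OF nn] .
  qed
qed

theorem mainTheorem6:
  fixes N a :: nat and \<epsilon> p q C :: real and M :: "nat \<Rightarrow> real"
  assumes "a \<in> {1..N}" and "\<epsilon> > 0" and "p > 1" and "C > 0"
    and "\<And>k. \<bar>M k\<bar> < C * (ln (real (N * k + N + a))) powr q / (real k powr p + \<epsilon>)"
  shows "(\<lambda>n. \<Sum>k=0..n. \<bar>M k\<bar> * (real N * (pochhammer (real a / real N) (n + 1))\<^sup>2 /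
            (fact (n - k) * pochhammer (2 * real a / real N) (n + k + 1))))
         \<longlonglongrightarrow> real N / Beta (real a / real N) (real a / real N) * (\<Sum>k. \<bar>M k\<bar>)"
proof -
  have a1: "1 \<le> a" and aN: "a \<le> N" using assms(1) by auto
  define x where "x = real a / real N"
  have x: "x > 0" unfolding x_def using a1 aN by simp
  have x2: "2 * real a / real N = 2 * x" unfolding x_def by simp
  have sM: "summable (\<lambda>k. \<bar>M k\<bar>)"
  proof (rule summable_comparison_test'[OF summable_bound[OF a1 aN assms(2,3,4), of q], of 0])
    fix k :: nat
    show "norm \<bar>M k\<bar> \<le> C * (ln (real (N*k+N+a))) powr q / (real k powr p + \<epsilon>)"
      using assms(5)[of k] by simp
  qed
  have conv: "convergent (\<lambda>n. wt x n 0)" using wt0_lim[OF x] by (auto simp: convergent_def)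
  obtain Bd where Bd: "Bd > 0" "\<And>n. norm (wt x n 0) \<le> Bd"
    using BseqE[OF convergent_imp_Bseq[OF conv]] by blast
  define A where "A = (\<lambda>k n. if k \<le> n then \<bar>M k\<bar> * (real N * wt x n k) else 0)"
  have T: "((\<lambda>n. suminf (\<lambda>k. A k n)) \<longlongrightarrow> suminf (\<lambda>k. \<bar>M k\<bar> * (real N * (1 / Beta x x)))) sequentially"
  proof (rule conjunct2[OF conjunct2[OF tannerys_theorem]])
    fix k
    show "((\<lambda>n. A k n) \<longlongrightarrow> \<bar>M k\<bar> * (real N * (1 / Beta x x))) sequentially"
    proof -
      have "(\<lambda>n. \<bar>M k\<bar> * (real N * wt x n k)) \<longlonglongrightarrow> \<bar>M k\<bar> * (real N * (1 / Beta x x))"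
        by (intro tendsto_mult tendsto_const wt_lim[OF x])
      moreover have "eventually (\<lambda>n. \<bar>M k\<bar> * (real N * wt x n k) = A k n) sequentially"
        using eventually_ge_at_top[of k] by eventually_elim (simp add: A_def)
      ultimately show ?thesis by (simp add: tendsto_cong)
    qed
  next
    show "eventually (\<lambda>(k,n). norm (A k n) \<le> \<bar>M k\<bar> * (real N * Bd)) (at_top \<times>\<^sub>F sequentially)"
    proof (rule always_eventually, clarify)
      fix k n
      show "norm (A k n) \<le> \<bar>M k\<bar> * (real N * Bd)"
      proof (cases "k \<le> n")
        case True
        have "wt x n k \<le> Bd" using wt_le[OF x True] Bd(2)[of n] by simp
        hence "\<bar>M k\<bar> * (real N * wt x n k) \<le> \<bar>M k\<bar> * (real N * Bd)"
          by (intro mult_left_mono) auto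
        moreover have "0 \<le> \<bar>M k\<bar> * (real N * wt x n k)" using wt_nonneg[OF x, of n k] by simp
        ultimately show ?thesis using True by (simp add: A_def)
      next
        case False
        thus ?thesis using Bd by (simp add: A_def)
      qed
    qed
  next
    show "summable (\<lambda>k. \<bar>M k\<bar> * (real N * Bd))" by (rule summable_mult2[OF sM])
  qed simp
  have e1: "suminf (\<lambda>k. \<bar>M k\<bar> * (real N * (1 / Beta x x))) = real N / Beta x x * (\<Sum>k. \<bar>M k\<bar>)"
  proof -
    have "suminf (\<lambda>k. \<bar>M k\<bar> * (real N * (1 / Beta x x))) = (\<Sum>k. \<bar>M k\<bar>) * (real N * (1 / Beta x x))"
      by (rule suminf_mult2[OF sM, symmetric])
    also have "\<dots> = real N / Beta x x * (\<Sum>k. \<bar>M k\<bar>)" by simp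
    finally show ?thesis .
  qed
  have e2: "suminf (\<lambda>k. A k n) = (\<Sum>k=0..n. \<bar>M k\<bar> * (real N * (pochhammer (real a / real N) (n + 1))\<^sup>2 /
            (fact (n - k) * pochhammer (2 * real a / real N) (n + k + 1))))" for n
  proof -
    have "suminf (\<lambda>k. A k n) = (\<Sum>k\<in>{0..n}. A k n)"
      by (rule suminf_finite) (auto simp: A_def)
    also have "\<dots> = (\<Sum>k=0..n. \<bar>M k\<bar> * (real N * (pochhammer x (n + 1))\<^sup>2 /
            (fact (n - k) * pochhammer (2 * x) (n + k + 1))))"
    proof (rule sum.cong[OF refl])
      fix k assume "k \<in> {0..n}"
      hence "k \<le> n" by simp
      thus "A k n = \<bar>M k\<bar> * (real N * (pochhammer x (n + 1))\<^sup>2 /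
            (fact (n - k) * pochhammer (2 * x) (n + k + 1)))"
        by (simp only: A_def wt_def if_True times_divide_eq_right)
    qed
    also have "\<dots> = (\<Sum>k=0..n. \<bar>M k\<bar> * (real N * (pochhammer (real a / real N) (n + 1))\<^sup>2 /
            (fact (n - k) * pochhammer (2 * real a / real N) (n + k + 1))))"
      unfolding x2 x_def ..
    finally show ?thesis .
  qed
  have T': "(\<lambda>n. \<Sum>k=0..n. \<bar>M k\<bar> * (real N * (pochhammer (real a / real N) (n + 1))\<^sup>2 /
            (fact (n - k) * pochhammer (2 * real a / real N) (n + k + 1))))
         \<longlonglongrightarrow> real N / Beta x x * (\<Sum>k. \<bar>M k\<bar>)"
    using T unfolding e1 e2 .
  show ?thesis using T' unfolding x_def .
qed

end
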